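(* Let $d\ge 3$. Each generator $a_i$ ($1\le i\le d$) has infinite order in $G_d$.
   Context: Let $d\ge 3$, $X=\{1,\dots,d\}$, $T$ the $d$-regular rooted tree with vertex set $X^*$. $\mathrm{Aut}(T)$ is the group of root-preserving automorphisms with product left-to-right: $(gh)(u)=h(g(u))$. Sections $g|_u$ are defined by $g(uv)=g(u)\,g|_u(v)$; we write $g=(g|_1,\dots,g|_d)\lambda_g$ with $\lambda_g\in S_d$ the action on the first level; $e$ is the identity; $\overline{j}\in\{1,\dots,d\}$ denotes $j$ mod $d$. $G_d=\langle a_1,\dots,a_d\rangle\le\mathrm{Aut}(T)$ where $a_i$ acts on the first level as $(i\ \overline{i+1})$, with $a_i|_i=a_i$, $a_i|_{\overline{i+1}}=a_{\overline{i+1}}$, and $a_i|_x=e$ otherwise. *)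

theory Defs
  imports Main
begin

text \<open>Vertices of the d-regular rooted tree T are words over X = {1..d}, i.e.
  elements of lists {1..d}.  The cyclic successor of i in {1..d} (written
  overline(i+1) in the paper) is i mod d + 1.\<close>

definition csucc :: "nat \<Rightarrow> nat \<Rightarrow> nat" where
  "csucc d i = i mod d + 1"

text \<open>The generator a_i of G_d as a map on words, from the wreath recursion
  a_i = (a_i|_1,...,a_i|_d) (i csucc(i)) with a_i|_i = a_i,
  a_i|_csucc(i) = a_csucc(i), and trivial sections elsewhere, using
  g(x w) = lambda_g(x) g|_x(w).\<close>

fun gen :: "nat \<Rightarrow> nat \<Rightarrow> nat list \<Rightarrow> nat list" where
  "gen d i [] = []"
| "gen d i (x # w) =
     (if x = i then csucc d i # gen d i w
      else if x = csucc d i then i # gen d (csucc d i) w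
      else x # w)"

end

theory Submission
  imports Defs
begin

lemma cs_facts:
  assumes "d \<ge> 3" "j \<in> {1..d}"
  shows "csucc d j \<in> {1..d}" "csucc d j \<noteq> j" "csucc d (csucc d j) \<noteq> j"
        "csucc d (csucc d j) \<noteq> csucc d j"
proof -
  have e: "\<And>k. k \<in> {1..d} \<Longrightarrow> csucc d k = (if k < d then k + 1 else 1)"
    using assms(1) by (auto simp: csucc_def)
  show "csucc d j \<in> {1..d}" using assms by (auto simp: e)
  then show "csucc d (csucc d j) \<noteq> csucc d j" using assms by (auto simp: e)
  show "csucc d j \<noteq> j" using assms by (auto simp: e)
  show "csucc d (csucc d j) \<noteq> j" using assms
    by (cases "j < d"; cases "j + 1 < d"; auto simp: e split: if_splits)
qed

definition C :: "nat \<Rightarrow> nat \<Rightarrow> nat list \<Rightarrow> nat list" where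
  "C d j = gen d j \<circ> gen d (csucc d j)"

lemma C_steps:
  assumes "d \<ge> 3" "j \<in> {1..d}"
  defines "s \<equiv> csucc d j" and "t \<equiv> csucc d (csucc d j)"
  shows "C d j (j # x) = s # gen d j x"
    "C d j (s # x) = t # gen d s x"
    "C d j (t # x) = j # gen d s (gen d t x)"
  using cs_facts[OF assms(1,2)] by (auto simp: C_def s_def t_def)

lemma C_three:
  assumes "d \<ge> 3" "j \<in> {1..d}"
  shows "(C d j ^^ 3) (j # csucc d (csucc d j) # w)
       = j # csucc d (csucc d j) # C d (csucc d j) w"
proof -
  have f: "csucc d j \<in> {1..d}" "csucc d j \<noteq> j" "csucc d (csucc d j) \<noteq> j"
        "csucc d (csucc d j) \<noteq> csucc d j" using cs_facts[OF assms] by auto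
  have g: "csucc d (csucc d (csucc d j)) \<noteq> csucc d j"
    using cs_facts(3)[OF assms(1) f(1)] .
  have "(C d j ^^ 3) x = C d j (C d j (C d j x))" for x by (simp add: numeral_3_eq_3)
  then show ?thesis using f g
    by (simp add: C_steps[OF assms] C_def)
qed

lemma C_pow3:
  assumes "d \<ge> 3" "j \<in> {1..d}"
  shows "(C d j ^^ (3*m)) (j # csucc d (csucc d j) # w)
       = j # csucc d (csucc d j) # (C d (csucc d j) ^^ m) w"
proof (induction m arbitrary: w)
  case 0 then show ?case by simp
next
  case (Suc m)
  have "(C d j ^^ (3 * Suc m)) = (C d j ^^ (3*m)) \<circ> (C d j ^^ 3)"
    by (simp add: funpow_add[symmetric] add.commute)
  then show ?case using Suc C_three[OF assms]
    by (simp add: funpow_swap1)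
qed

lemma C_head:
  assumes "d \<ge> 3" "j \<in> {1..d}"
  shows "\<exists>y. (C d j ^^ n) (j # x) =
     (if n mod 3 = 0 then j else if n mod 3 = 1 then csucc d j else csucc d (csucc d j)) # y"
proof (induction n)
  case 0 then show ?case by simp
next
  case (Suc n)
  then obtain y where y: "(C d j ^^ n) (j # x) =
     (if n mod 3 = 0 then j else if n mod 3 = 1 then csucc d j else csucc d (csucc d j)) # y" by blast
  have "n mod 3 = 0 \<or> n mod 3 = 1 \<or> n mod 3 = 2" by auto
  then show ?case using y C_steps[OF assms] by (auto simp: mod_Suc)
qed

lemma C_inf:
  assumes "d \<ge> 3" "n > 0"
  shows "\<forall>j \<in> {1..d}. \<exists>w \<in> lists {1..d}. (C d j ^^ n) w \<noteq> w"
  using assms(2)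
proof (induction n rule: less_induct)
  case (less n)
  show ?case
  proof
    fix j assume j: "j \<in> {1..d}"
    note f = cs_facts[OF assms(1) j]
    show "\<exists>w \<in> lists {1..d}. (C d j ^^ n) w \<noteq> w"
    proof (cases "n mod 3 = 0")
      case False
      obtain y where "(C d j ^^ n) [j] =
        (if n mod 3 = 0 then j else if n mod 3 = 1 then csucc d j else csucc d (csucc d j)) # y"
        using C_head[OF assms(1) j] by blast
      then have "(C d j ^^ n) [j] \<noteq> [j]" using False f by auto
      then show ?thesis using j by (intro bexI[of _ "[j]"]) auto
    next
      case True
      then obtain m where m: "n = 3*m" by auto
      with less.prems have "m < n" "m > 0" by auto
      then obtain w where w: "w \<in> lists {1..d}" "(C d (csucc d j) ^^ m) w \<noteq> w"
        using less.IH f(1) by blast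
      have "csucc d (csucc d j) \<in> {1..d}" using cs_facts(1)[OF assms(1) f(1)] .
      then show ?thesis using w j m C_pow3[OF assms(1) j, of m w]
        by (intro bexI[of _ "j # csucc d (csucc d j) # w"]) auto
    qed
  qed
qed

lemma gen_pow2:
  assumes "d \<ge> 3" "i \<in> {1..d}"
  shows "(gen d i ^^ (2*m)) (csucc d i # w) = csucc d i # (C d i ^^ m) w"
proof (induction m arbitrary: w)
  case 0 then show ?case by simp
next
  case (Suc m)
  have e: "(gen d i ^^ 2) (csucc d i # w) = csucc d i # C d i w" for w
    using cs_facts[OF assms] by (simp add: numeral_2_eq_2 C_def)
  have "(gen d i ^^ (2 * Suc m)) = (gen d i ^^ (2*m)) \<circ> (gen d i ^^ 2)"
    by (simp add: funpow_add[symmetric] add.commute)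
  then show ?case using Suc e by (simp add: funpow_swap1)
qed

lemma gen_head:
  assumes "d \<ge> 3" "i \<in> {1..d}"
  shows "\<exists>y. (gen d i ^^ n) (i # x) = (if even n then i else csucc d i) # y"
proof (induction n)
  case 0 then show ?case by simp
next
  case (Suc n)
  then obtain y where "(gen d i ^^ n) (i # x) = (if even n then i else csucc d i) # y" by blast
  then show ?case using cs_facts[OF assms] by auto
qed

theorem corollary3p7:
  fixes d i :: nat
  assumes "d \<ge> 3" and "i \<in> {1..d}"
  shows "\<forall>n::nat. n > 0 \<longrightarrow> (\<exists>w \<in> lists {1..d}. (gen d i ^^ n) w \<noteq> w)"
proof (intro allI impI)
  fix n :: nat assume n: "n > 0"
  note f = cs_facts[OF assms]
  show "\<exists>w \<in> lists {1..d}. (gen d i ^^ n) w \<noteq> w"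
  proof (cases "even n")
    case False
    obtain y where "(gen d i ^^ n) [i] = (if even n then i else csucc d i) # y"
      using gen_head[OF assms] by blast
    then have "(gen d i ^^ n) [i] \<noteq> [i]" using False f by auto
    then show ?thesis using assms by (intro bexI[of _ "[i]"]) auto
  next
    case True
    then obtain m where m: "n = 2*m" by auto
    with n have "m > 0" by auto
    then obtain w where w: "w \<in> lists {1..d}" "(C d i ^^ m) w \<noteq> w"
      using C_inf[OF assms(1)] assms(2) by blast
    then show ?thesis using f m gen_pow2[OF assms, of m w]
      by (intro bexI[of _ "csucc d i # w"]) auto
  qed
qed

end
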